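(* Let $G$ be a graph with no isolated vertex and $H$ a nontrivial graph with $\gamma(H)=1$. Then there exists a $\gamma_{(1,0,0)}^s(G\circ H)$-function $f$ such that $f(V(H_u))=\sum_{y\in V(H)}f(u,y)\le2$ for every $u\in V(G)$.
   Context: All graphs are finite and simple; nontrivial means at least two vertices; $\gamma(H)$ is the domination number. For a graph $G$, a function $f:V(G)\to\{0,1,2\}$ is a $(1,0,0)$-dominating function if every vertex $v$ with $f(v)=0$ satisfies $\sum_{u\in N(v)}f(u)\ge1$ ($N(v)$ the open neighbourhood). For adjacent $v,u$ with $f(v)=0$, $f(u)>0$, $f_{u\to v}$ is defined by $f_{u\to v}(v)=1$, $f_{u\to v}(u)=f(u)-1$, $f_{u\to v}(x)=f(x)$ otherwise. $f$ is a secure $(1,0,0)$-dominating function if it is $(1,0,0)$-dominating and for every $v$ with $f(v)=0$ there is $u\in N(v)$ with $f(u)>0$ such that $f_{u\to v}$ is $(1,0,0)$-dominating. $\gamma_{(1,0,0)}^s(G)$ (the weak Roman domination number) is the minimum of $\sum_v f(v)$ over such functions, and a $\gamma_{(1,0,0)}^s(G)$-function is one attaining this minimum. The lexicographic product $G\circ H$ has vertex set $V(G)\times V(H)$, with $(u,v)(x,y)$ an edge iff $ux\in E(G)$, or $u=x$ and $vy\in E(H)$; $H_u$ is the subgraph induced by $\{u\}\times V(H)$. *)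

theory Defs
  imports Main
begin

definition graph :: "'a set \<Rightarrow> ('a \<Rightarrow> 'a \<Rightarrow> bool) \<Rightarrow> bool" where
  "graph V E \<longleftrightarrow> finite V \<and> (\<forall>x y. E x y \<longrightarrow> x \<in> V \<and> y \<in> V)
     \<and> (\<forall>x y. E x y \<longrightarrow> E y x) \<and> (\<forall>x. \<not> E x x)"

definition nbhd :: "'a set \<Rightarrow> ('a \<Rightarrow> 'a \<Rightarrow> bool) \<Rightarrow> 'a \<Rightarrow> 'a set" where
  "nbhd V E v = {u \<in> V. E v u}"

definition no_isolated :: "'a set \<Rightarrow> ('a \<Rightarrow> 'a \<Rightarrow> bool) \<Rightarrow> bool" where
  "no_isolated V E \<longleftrightarrow> (\<forall>v\<in>V. nbhd V E v \<noteq> {})"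

definition dominating_set :: "'a set \<Rightarrow> ('a \<Rightarrow> 'a \<Rightarrow> bool) \<Rightarrow> 'a set \<Rightarrow> bool" where
  "dominating_set V E D \<longleftrightarrow> D \<subseteq> V \<and> (\<forall>v \<in> V - D. \<exists>u\<in>D. E v u)"

definition domination_number :: "'a set \<Rightarrow> ('a \<Rightarrow> 'a \<Rightarrow> bool) \<Rightarrow> nat" where
  "domination_number V E = (LEAST k. \<exists>D. dominating_set V E D \<and> card D = k)"

definition lex_vertices :: "'a set \<Rightarrow> 'b set \<Rightarrow> ('a \<times> 'b) set" where
  "lex_vertices VG VH = VG \<times> VH"

definition lex_edge :: "'a set \<Rightarrow> ('a \<Rightarrow> 'a \<Rightarrow> bool) \<Rightarrow> 'b set \<Rightarrow> ('b \<Rightarrow> 'b \<Rightarrow> bool)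
     \<Rightarrow> 'a \<times> 'b \<Rightarrow> 'a \<times> 'b \<Rightarrow> bool" where
  "lex_edge VG EG VH EH p q \<longleftrightarrow> p \<in> VG \<times> VH \<and> q \<in> VG \<times> VH \<and>
     (EG (fst p) (fst q) \<or> (fst p = fst q \<and> EH (snd p) (snd q)))"

definition labelling :: "'a set \<Rightarrow> ('a \<Rightarrow> nat) \<Rightarrow> bool" where
  "labelling V f \<longleftrightarrow> (\<forall>v\<in>V. f v \<le> 2) \<and> (\<forall>v. v \<notin> V \<longrightarrow> f v = 0)"

definition dom100 :: "'a set \<Rightarrow> ('a \<Rightarrow> 'a \<Rightarrow> bool) \<Rightarrow> ('a \<Rightarrow> nat) \<Rightarrow> bool" where
  "dom100 V E f \<longleftrightarrow> labelling V f \<and>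
     (\<forall>v\<in>V. f v = 0 \<longrightarrow> (\<Sum>u\<in>nbhd V E v. f u) \<ge> 1)"

definition move :: "('a \<Rightarrow> nat) \<Rightarrow> 'a \<Rightarrow> 'a \<Rightarrow> 'a \<Rightarrow> nat" where
  "move f u v = (\<lambda>x. if x = v then 1 else if x = u then f u - 1 else f x)"

definition secure_dom100 :: "'a set \<Rightarrow> ('a \<Rightarrow> 'a \<Rightarrow> bool) \<Rightarrow> ('a \<Rightarrow> nat) \<Rightarrow> bool" where
  "secure_dom100 V E f \<longleftrightarrow> dom100 V E f \<and>
     (\<forall>v\<in>V. f v = 0 \<longrightarrow> (\<exists>u\<in>nbhd V E v. f u > 0 \<and> dom100 V E (move f u v)))"

definition weight :: "'a set \<Rightarrow> ('a \<Rightarrow> nat) \<Rightarrow> nat" where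
  "weight V f = (\<Sum>v\<in>V. f v)"

definition wrd_number :: "'a set \<Rightarrow> ('a \<Rightarrow> 'a \<Rightarrow> bool) \<Rightarrow> nat" where
  "wrd_number V E = (LEAST k. \<exists>f. secure_dom100 V E f \<and> weight V f = k)"

definition wrd_function :: "'a set \<Rightarrow> ('a \<Rightarrow> 'a \<Rightarrow> bool) \<Rightarrow> ('a \<Rightarrow> nat) \<Rightarrow> bool" where
  "wrd_function V E f \<longleftrightarrow> secure_dom100 V E f \<and> weight V f = wrd_number V E"

end

theory Submission
  imports Defs
begin

lemma fin_nbhd:
  assumes "finite V" shows "finite (nbhd V E p)"
  using assms unfolding nbhd_def by auto

lemma transfer:
  fixes VG :: "'a set" and EG :: "'a \<Rightarrow> 'a \<Rightarrow> bool"
    and VH :: "'b set" and EH :: "'b \<Rightarrow> 'b \<Rightarrow> bool"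
  assumes gG: "graph VG EG" and gH: "graph VH EH" and u: "u \<in> VG" and h: "h \<in> VH"
    and hdom: "\<forall>y\<in>VH. y \<noteq> h \<longrightarrow> EH y h"
    and dg: "dom100 (VG \<times> VH) (lex_edge VG EG VH EH) g"
    and lg: "labelling (VG \<times> VH) g'"
    and agree: "\<forall>p. fst p \<noteq> u \<longrightarrow> g' p = g p"
    and g1: "g' (u,h) \<ge> 1"
  shows "dom100 (VG \<times> VH) (lex_edge VG EG VH EH) g'"
proof -
  let ?V = "VG \<times> VH" and ?E = "lex_edge VG EG VH EH"
  have finV: "finite ?V" using gG gH unfolding graph_def by auto
  have key: "(\<Sum>q\<in>nbhd ?V ?E p. g' q) \<ge> 1" if p: "p \<in> ?V" "g' p = 0" for p
  proof -
    have viaUH: "(\<Sum>q\<in>nbhd ?V ?E p. g' q) \<ge> 1" if "(u,h) \<in> nbhd ?V ?E p"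
    proof -
      have "g' (u,h) \<le> (\<Sum>q\<in>nbhd ?V ?E p. g' q)"
        by (rule member_le_sum) (use that fin_nbhd[OF finV] in auto)
      then show ?thesis using g1 by simp
    qed
    obtain x y where xy: "p = (x,y)" by (cases p)
    show ?thesis
    proof (cases "x = u")
      case True
      then have "y \<noteq> h" using p g1 xy by auto
      then have "EH y h" using hdom p xy by auto
      then have "(u,h) \<in> nbhd ?V ?E p"
        using p xy True u h unfolding nbhd_def lex_edge_def by auto
      then show ?thesis by (rule viaUH)
    next
      case False
      show ?thesis
      proof (cases "EG x u")
        case True
        then have "(u,h) \<in> nbhd ?V ?E p"
          using p xy u h unfolding nbhd_def lex_edge_def by auto
        then show ?thesis by (rule viaUH)
      next
        case nE: False
        have gp: "g p = 0" using agree p xy False by auto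
        have "(\<Sum>q\<in>nbhd ?V ?E p. g q) \<ge> 1" using dg p gp unfolding dom100_def by auto
        moreover have "(\<Sum>q\<in>nbhd ?V ?E p. g' q) = (\<Sum>q\<in>nbhd ?V ?E p. g q)"
        proof (rule sum.cong)
          fix q assume "q \<in> nbhd ?V ?E p"
          then have "fst q \<noteq> u" using xy False nE unfolding nbhd_def lex_edge_def by auto
          then show "g' q = g q" using agree by blast
        qed simp
        ultimately show ?thesis by simp
      qed
    qed
  qed
  show ?thesis unfolding dom100_def using lg key by auto
qed

lemma labelling_move:
  assumes "labelling V f" "u \<in> V" "v \<in> V"
  shows "labelling V (move f u v)"
  using assms unfolding labelling_def move_def by auto

theorem lemma14:
  fixes VG :: "'a set" and EG :: "'a \<Rightarrow> 'a \<Rightarrow> bool"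
    and VH :: "'b set" and EH :: "'b \<Rightarrow> 'b \<Rightarrow> bool"
  assumes "graph VG EG" and "no_isolated VG EG"
    and "graph VH EH" and "card VH \<ge> 2" and "domination_number VH EH = 1"
  shows "\<exists>f. wrd_function (lex_vertices VG VH) (lex_edge VG EG VH EH) f \<and>
           (\<forall>u\<in>VG. (\<Sum>y\<in>VH. f (u, y)) \<le> 2)"
proof -
  let ?V = "VG \<times> VH" and ?E = "lex_edge VG EG VH EH"
  have gG: "graph VG EG" and gH: "graph VH EH" using assms by auto
  have finV: "finite ?V" using gG gH unfolding graph_def by auto
  have finVH: "finite VH" using gH unfolding graph_def by auto
  have "\<exists>D. dominating_set VH EH D \<and> card D = 1"
  proof -
    have w: "dominating_set VH EH VH" unfolding dominating_set_def by auto
    have "\<exists>D. dominating_set VH EH D \<and> card D = domination_number VH EH"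
      unfolding domination_number_def
      by (rule LeastI[where P = "\<lambda>k. \<exists>D. dominating_set VH EH D \<and> card D = k" and k = "card VH"]) (use w in blast)
    then show ?thesis using assms(5) by simp
  qed
  then obtain D where D: "dominating_set VH EH D" "card D = 1" by blast
  then obtain h where hD: "D = {h}" using card_1_singletonE by blast
  have h: "h \<in> VH" using D hD unfolding dominating_set_def by auto
  have hdom: "\<forall>y\<in>VH. y \<noteq> h \<longrightarrow> EH y h" using D hD unfolding dominating_set_def by auto
  have hsym: "\<And>x y. EH x y \<Longrightarrow> EH y x" using gH unfolding graph_def by auto
  have Gsym: "\<And>x y. EG x y \<Longrightarrow> EG y x" using gG unfolding graph_def by auto
  have Girr: "\<And>x. \<not> EG x x" using gG unfolding graph_def by auto
  define one where "one = (\<lambda>p. if p \<in> ?V then (1::nat) else 0)"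
  have sone: "secure_dom100 ?V ?E one"
    unfolding secure_dom100_def dom100_def labelling_def one_def by auto
  have ex: "\<exists>f. secure_dom100 ?V ?E f \<and> weight ?V f = wrd_number ?V ?E"
    unfolding wrd_number_def
    by (rule LeastI[where P = "\<lambda>k. \<exists>f. secure_dom100 ?V ?E f \<and> weight ?V f = k" and k = "weight ?V one"]) (use sone in blast)
  then obtain f where fs: "secure_dom100 ?V ?E f" and fw: "weight ?V f = wrd_number ?V ?E" by blast
  have bound: "(\<Sum>y\<in>VH. f (u, y)) \<le> 2" if u: "u \<in> VG" for u
  proof (rule ccontr)
    assume big: "\<not> (\<Sum>y\<in>VH. f (u, y)) \<le> 2"
    define f' where "f' = (\<lambda>p. if fst p = u then (if p = (u,h) then (2::nat) else 0) else f p)"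
    have fd: "dom100 ?V ?E f" and fl: "labelling ?V f" using fs unfolding secure_dom100_def dom100_def by auto
    have f'l: "labelling ?V f'" using fl u h unfolding labelling_def f'_def by auto
    have agree: "\<forall>p. fst p \<noteq> u \<longrightarrow> f' p = f p" unfolding f'_def by auto
    have f'd: "dom100 ?V ?E f'"
      by (rule transfer[OF gG gH u h hdom fd f'l agree]) (simp add: f'_def)
    have f'sec: "\<exists>w\<in>nbhd ?V ?E p. f' w > 0 \<and> dom100 ?V ?E (move f' w p)"
      if p: "p \<in> ?V" "f' p = 0" for p
    proof -
      obtain x y where xy: "p = (x,y)" by (cases p)
      show ?thesis
      proof (cases "x = u")
        case True
        then have "y \<noteq> h" using p xy by (auto simp: f'_def)
        then have "EH y h" using hdom p xy by auto
        then have inb: "(u,h) \<in> nbhd ?V ?E p"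
          using p xy True u h unfolding nbhd_def lex_edge_def by auto
        have "dom100 ?V ?E (move f' (u,h) p)"
        proof (rule transfer[OF gG gH u h hdom fd])
          show "labelling ?V (move f' (u, h) p)" by (rule labelling_move[OF f'l]) (use u h p in auto)
          show "\<forall>q. fst q \<noteq> u \<longrightarrow> move f' (u, h) p q = f q"
            using True xy by (auto simp: move_def f'_def)
          show "1 \<le> move f' (u, h) p (u, h)"
            using True xy \<open>y \<noteq> h\<close> by (auto simp: move_def f'_def)
        qed
        then show ?thesis using inb by (auto simp: f'_def)
      next
        case False
        have fp: "f p = 0" using p False xy by (auto simp: f'_def)
        then obtain w where w: "w \<in> nbhd ?V ?E p" "f w > 0" "dom100 ?V ?E (move f w p)"
          using fs p unfolding secure_dom100_def by blast
        have wV: "w \<in> ?V" using w unfolding nbhd_def by auto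
        have lm: "labelling ?V (move f w p)" using w unfolding dom100_def by auto
        show ?thesis
        proof (cases "fst w = u")
          case False2: False
          have "dom100 ?V ?E (move f' w p)"
          proof (rule transfer[OF gG gH u h hdom w(3)])
            show "labelling ?V (move f' w p)" by (rule labelling_move[OF f'l]) (use wV p in auto)
            show "\<forall>q. fst q \<noteq> u \<longrightarrow> move f' w p q = move f w p q"
              by (auto simp: move_def f'_def)
            show "1 \<le> move f' w p (u, h)"
              using False2 False xy by (auto simp: move_def f'_def)
          qed
          moreover have "f' w > 0" using w False2 by (auto simp: f'_def)
          ultimately show ?thesis using w by auto
        next
          case True2: True
          have "EG x u" using w True2 False xy unfolding nbhd_def lex_edge_def by auto
          then have inb: "(u,h) \<in> nbhd ?V ?E p"
            using p xy u h unfolding nbhd_def lex_edge_def by auto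
          have "dom100 ?V ?E (move f' (u,h) p)"
          proof (rule transfer[OF gG gH u h hdom w(3)])
            show "labelling ?V (move f' (u, h) p)" by (rule labelling_move[OF f'l]) (use u h p in auto)
            show "\<forall>q. fst q \<noteq> u \<longrightarrow> move f' (u, h) p q = move f w p q"
              using True2 by (auto simp: move_def f'_def)
            show "1 \<le> move f' (u, h) p (u, h)"
              using False xy by (auto simp: move_def f'_def)
          qed
          then show ?thesis using inb by (auto simp: f'_def)
        qed
      qed
    qed
    have f'sd: "secure_dom100 ?V ?E f'" unfolding secure_dom100_def using f'd f'sec by auto
    have split: "weight ?V g = (\<Sum>y\<in>VH. g (u,y)) + (\<Sum>p\<in>?V - {u} \<times> VH. g p)" for g :: "'a \<times> 'b \<Rightarrow> nat"
    proof -
      have "?V = ({u} \<times> VH) \<union> (?V - {u} \<times> VH)" using u by auto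
      then have "weight ?V g = (\<Sum>p\<in>{u} \<times> VH. g p) + (\<Sum>p\<in>?V - {u} \<times> VH. g p)"
        unfolding weight_def by (metis (no_types, lifting) Diff_disjoint Diff_subset finV finite_subset sum.union_disjoint Un_Diff_cancel Un_upper1 finite_Un)
      moreover have "(\<Sum>p\<in>{u} \<times> VH. g p) = (\<Sum>y\<in>VH. g (u,y))"
        by (rule sum.reindex_bij_witness[where i = "\<lambda>y. (u,y)" and j = snd]) auto
      ultimately show ?thesis by simp
    qed
    have s1: "(\<Sum>y\<in>VH. f' (u,y)) = 2"
    proof -
      have "(\<Sum>y\<in>VH. f' (u,y)) = (\<Sum>y\<in>VH. if y = h then 2 else 0)"
        by (rule sum.cong) (auto simp: f'_def)
      also have "\<dots> = 2" using h finVH by (simp add: sum.delta)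
      finally show ?thesis .
    qed
    have s2: "(\<Sum>p\<in>?V - {u} \<times> VH. f' p) = (\<Sum>p\<in>?V - {u} \<times> VH. f p)"
      by (rule sum.cong) (auto simp: f'_def)
    have lt: "weight ?V f' < weight ?V f" using split[of f] split[of f'] s1 s2 big by simp
    have "wrd_number ?V ?E \<le> weight ?V f'"
      unfolding wrd_number_def by (rule Least_le) (use f'sd in auto)
    then show False using lt fw by simp
  qed
  show ?thesis unfolding wrd_function_def lex_vertices_def using fs fw bound by auto
qed

end
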